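(* There exists $n_0$ such that for all $n\ge n_0$, $\operatorname{op}_{n,4}(123) > \operatorname{op}_{n,3}(123)$.
   Context: An ordered set partition of $[n]$ into $k$ blocks is a sequence $B_1/B_2/\cdots/B_k$ of nonempty, pairwise disjoint subsets of $[n]$ whose union is $[n]$; the order of the blocks matters, but not the order of elements within a block. Such a partition contains the pattern $123$ if there are block indices $i_1<i_2<i_3$ and elements $b_j\in B_{i_j}$ with $b_1<b_2<b_3$; otherwise it avoids $123$. $\operatorname{op}_{n,k}(123)$ is the number of $123$-avoiding ordered partitions of $[n]$ into $k$ blocks. *)

theory Defs
  imports Main
begin

definition ordered_set_partitions :: "nat \<Rightarrow> nat \<Rightarrow> nat set list set" where
  "ordered_set_partitions n k =
     {bs. length bs = k \<and> (\<forall>i<k. bs ! i \<noteq> {}) \<and>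
          (\<forall>i<k. \<forall>j<k. i \<noteq> j \<longrightarrow> bs ! i \<inter> bs ! j = {}) \<and>
          (\<Union>i<k. bs ! i) = {1..n}}"

definition contains_123 :: "nat set list \<Rightarrow> bool" where
  "contains_123 bs \<longleftrightarrow>
     (\<exists>i1 i2 i3 b1 b2 b3. i1 < i2 \<and> i2 < i3 \<and> i3 < length bs \<and>
        b1 \<in> bs ! i1 \<and> b2 \<in> bs ! i2 \<and> b3 \<in> bs ! i3 \<and> b1 < b2 \<and> b2 < b3)"

definition op_123 :: "nat \<Rightarrow> nat \<Rightarrow> nat" where
  "op_123 n k = card {bs \<in> ordered_set_partitions n k. \<not> contains_123 bs}"

end

theory Submission
  imports Defs
begin


definition inc3 :: "nat set \<Rightarrow> nat set \<Rightarrow> nat set \<Rightarrow> bool" where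
  "inc3 A B C \<longleftrightarrow> (\<exists>a\<in>A. \<exists>b\<in>B. \<exists>c\<in>C. a < b \<and> b < c)"

lemma c123_3: "contains_123 [A,B,C] \<longleftrightarrow> inc3 A B C"
proof
  assume "contains_123 [A,B,C]"
  then obtain i1 i2 i3 b1 b2 b3 where h: "i1 < i2" "i2 < i3" "i3 < 3"
     "b1 \<in> [A,B,C] ! i1" "b2 \<in> [A,B,C] ! i2" "b3 \<in> [A,B,C] ! i3" "b1 < b2" "b2 < b3"
    unfolding contains_123_def by auto
  then have "i1 = 0" "i2 = 1" "i3 = 2" by auto
  with h show "inc3 A B C" unfolding inc3_def by auto
next
  assume "inc3 A B C"
  then show "contains_123 [A,B,C]" unfolding inc3_def contains_123_def
    apply clarify
    subgoal for a b c apply (rule exI[of _ 0], rule exI[of _ 1], rule exI[of _ 2]) by auto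
    done
qed

lemma c123_4: "contains_123 [A,B,C,D] \<longleftrightarrow> inc3 A B C \<or> inc3 A B D \<or> inc3 A C D \<or> inc3 B C D"
proof
  assume "contains_123 [A,B,C,D]"
  then obtain i1 i2 i3 b1 b2 b3 where h: "i1 < i2" "i2 < i3" "i3 < 4"
     "b1 \<in> [A,B,C,D] ! i1" "b2 \<in> [A,B,C,D] ! i2" "b3 \<in> [A,B,C,D] ! i3" "b1 < b2" "b2 < b3"
    unfolding contains_123_def by auto
  then have "(i1 = 0 \<and> i2 = 1 \<and> i3 = 2) \<or> (i1 = 0 \<and> i2 = 1 \<and> i3 = 3) \<or> (i1 = 0 \<and> i2 = 2 \<and> i3 = 3) \<or> (i1 = 1 \<and> i2 = 2 \<and> i3 = 3)" by auto
  with h show "inc3 A B C \<or> inc3 A B D \<or> inc3 A C D \<or> inc3 B C D" unfolding inc3_def by auto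
next
  assume "inc3 A B C \<or> inc3 A B D \<or> inc3 A C D \<or> inc3 B C D"
  then show "contains_123 [A,B,C,D]" unfolding inc3_def contains_123_def
    apply (elim disjE bexE conjE)
    subgoal apply (rule exI[of _ 0], rule exI[of _ 1], rule exI[of _ 2]) by auto
    subgoal apply (rule exI[of _ 0], rule exI[of _ 1], rule exI[of _ 3]) by auto
    subgoal apply (rule exI[of _ 0], rule exI[of _ 2], rule exI[of _ 3]) by auto
    subgoal apply (rule exI[of _ 1], rule exI[of _ 2], rule exI[of _ 3]) by auto
    done
qed

lemma all3: "(\<forall>i<(3::nat). P i) \<longleftrightarrow> P 0 \<and> P 1 \<and> P 2"
  by (auto simp: eval_nat_numeral less_Suc_eq)
lemma all4: "(\<forall>i<(4::nat). P i) \<longleftrightarrow> P 0 \<and> P 1 \<and> P 2 \<and> P 3"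
  by (auto simp: numeral_3_eq_3 eval_nat_numeral less_Suc_eq)
lemma lt3: "{..<(3::nat)} = {0,1,2}" by auto
lemma lt4: "{..<(4::nat)} = {0,1,2,3}" by auto

lemma osp3: "[A,B,C] \<in> ordered_set_partitions n 3 \<longleftrightarrow> (A\<noteq>{} \<and> B\<noteq>{} \<and> C\<noteq>{} \<and>
   A\<inter>B={} \<and> A\<inter>C={} \<and> B\<inter>C={} \<and> A\<union>B\<union>C={1..n})"
  unfolding ordered_set_partitions_def all3 lt3
  apply (simp add: Int_commute)
  by blast

lemma osp4: "[A,B,C,D] \<in> ordered_set_partitions n 4 \<longleftrightarrow> (A\<noteq>{} \<and> B\<noteq>{} \<and> C\<noteq>{} \<and> D\<noteq>{} \<and>
   A\<inter>B={} \<and> A\<inter>C={} \<and> A\<inter>D={} \<and> B\<inter>C={} \<and> B\<inter>D={} \<and> C\<inter>D={} \<and> A\<union>B\<union>C\<union>D={1..n})"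
  unfolding ordered_set_partitions_def all4 lt4
  apply (simp add: Int_commute Un_assoc)
  by meson

lemma len3: "length xs = 3 \<Longrightarrow> \<exists>a b c. xs=[a,b,c]"
  by (auto simp: numeral_3_eq_3 length_Suc_conv)

lemma osp3_form: "bs \<in> ordered_set_partitions n 3 \<Longrightarrow> \<exists>A B C. bs = [A,B,C]"
proof -
  assume "bs \<in> ordered_set_partitions n 3"
  then have "length bs = 3" by (simp add: ordered_set_partitions_def)
  then show ?thesis by (rule len3)
qed

lemma osp_finite: "finite (ordered_set_partitions n k)"
proof -
  have "ordered_set_partitions n k \<subseteq> {bs. set bs \<subseteq> Pow {1..n} \<and> length bs = k}"
  proof
    fix bs assume h: "bs \<in> ordered_set_partitions n k"
    then have l: "length bs = k" and u: "(\<Union>i<k. bs ! i) = {1..n}"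
      unfolding ordered_set_partitions_def by auto
    have "set bs \<subseteq> Pow {1..n}"
    proof
      fix X assume "X \<in> set bs"
      then obtain i where "i < k" "X = bs ! i" using l by (auto simp: in_set_conv_nth)
      then have "X \<subseteq> (\<Union>i<k. bs ! i)" by auto
      then show "X \<in> Pow {1..n}" using u by auto
    qed
    then show "bs \<in> {bs. set bs \<subseteq> Pow {1..n} \<and> length bs = k}" using l by auto
  qed
  moreover have "finite {bs. set bs \<subseteq> Pow {1..n} \<and> length bs = k}"
    by (rule finite_lists_length_eq) auto
  ultimately show ?thesis by (rule finite_subset)
qed
lemma inc3_mono: "inc3 A' B' C' \<Longrightarrow> A' \<subseteq> A \<Longrightarrow> B' \<subseteq> B \<Longrightarrow> C' \<subseteq> C \<Longrightarrow> inc3 A B C"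
  unfolding inc3_def by blast
lemma dec12: "(\<forall>x\<in>X. \<forall>y\<in>Y. y \<le> x) \<Longrightarrow> \<not> inc3 X Y Z"
  unfolding inc3_def by force
lemma dec23: "(\<forall>y\<in>Y. \<forall>z\<in>Z. z \<le> y) \<Longrightarrow> \<not> inc3 X Y Z"
  unfolding inc3_def by force

definition Av :: "nat \<Rightarrow> nat \<Rightarrow> nat set list set" where
  "Av n k = {bs \<in> ordered_set_partitions n k. \<not> contains_123 bs}"

lemma Av3: "[A,B,C] \<in> Av n 3 \<longleftrightarrow> (A\<noteq>{} \<and> B\<noteq>{} \<and> C\<noteq>{} \<and>
   A\<inter>B={} \<and> A\<inter>C={} \<and> B\<inter>C={} \<and> A\<union>B\<union>C={1..n}) \<and> \<not> inc3 A B C"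
  unfolding Av_def by (simp only: mem_Collect_eq osp3 c123_3 conj_assoc)

lemma Av4: "[A,B,C,D] \<in> Av n 4 \<longleftrightarrow> (A\<noteq>{} \<and> B\<noteq>{} \<and> C\<noteq>{} \<and> D\<noteq>{} \<and>
   A\<inter>B={} \<and> A\<inter>C={} \<and> A\<inter>D={} \<and> B\<inter>C={} \<and> B\<inter>D={} \<and> C\<inter>D={} \<and> A\<union>B\<union>C\<union>D={1..n})
   \<and> \<not> inc3 A B C \<and> \<not> inc3 A B D \<and> \<not> inc3 A C D \<and> \<not> inc3 B C D"
  unfolding Av_def by (simp only: mem_Collect_eq osp4 c123_4 de_Morgan_disj conj_assoc)

lemma Av3_form: "bs \<in> Av n 3 \<Longrightarrow> \<exists>A B C. bs = [A,B,C]"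
  unfolding Av_def using osp3_form by blast

lemma Av_finite: "finite (Av n k)"
  unfolding Av_def using osp_finite by simp

lemma op_Av: "op_123 n k = card (Av n k)"
  unfolding op_123_def Av_def by simp

definition f1 :: "nat \<Rightarrow> nat set list \<Rightarrow> nat set list" where
  "f1 n bs = [{n}, bs!0 - {n}, bs!1, bs!2]"
definition f2 :: "nat \<Rightarrow> nat set list \<Rightarrow> nat set list" where
  "f2 n bs = [bs!0, {n}, bs!1 - {n}, bs!2]"
definition f3 :: "nat \<Rightarrow> nat set list \<Rightarrow> nat set list" where
  "f3 n bs = [bs!0, bs!1, {n}, bs!2 - {n}]"
definition f4 :: "nat \<Rightarrow> nat set list \<Rightarrow> nat set list" where
  "f4 n bs = [insert n (bs!1 - {Min (bs!1)}), {Min (bs!1)}, bs!2 - {Min (bs!2)}, {Min (bs!2)}]"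
definition f5 :: "nat \<Rightarrow> nat set list \<Rightarrow> nat set list" where
  "f5 n bs = [bs!0 - {Min (bs!0)}, {n, Min (bs!0)}, bs!2 - {Min (bs!2)}, {Min (bs!2)}]"

lemma f_simps:
  "f1 n [A,B,C] = [{n}, A-{n}, B, C]"
  "f2 n [A,B,C] = [A, {n}, B-{n}, C]"
  "f3 n [A,B,C] = [A, B, {n}, C-{n}]"
  "f4 n [A,B,C] = [insert n (B - {Min B}), {Min B}, C - {Min C}, {Min C}]"
  "f5 n [A,B,C] = [A - {Min A}, {n, Min A}, C - {Min C}, {Min C}]"
  by (simp_all add: f1_def f2_def f3_def f4_def f5_def)

lemma f1_Av: assumes "[A,B,C] \<in> Av n 3" "n \<in> A" "A \<noteq> {n}"
  shows "f1 n [A,B,C] \<in> Av n 4"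
proof -
  from assms(1) have p: "A\<noteq>{}" "B\<noteq>{}" "C\<noteq>{}" "A\<inter>B={}" "A\<inter>C={}" "B\<inter>C={}" "A\<union>B\<union>C={1..n}"
    and na: "\<not> inc3 A B C" by (auto simp: Av3)
  have sub: "A \<subseteq> {1..n}" "B \<subseteq> {1..n}" "C \<subseteq> {1..n}" using p(7) by auto
  have q: "A - {n} \<noteq> {}" using assms(2,3) by auto
  have n1: "\<not> inc3 {n} (A-{n}) B" "\<not> inc3 {n} (A-{n}) C" "\<not> inc3 {n} B C"
    using sub by (auto intro!: dec12)
  have n2: "\<not> inc3 (A-{n}) B C" using na inc3_mono[of "A-{n}" B C A B C] by blast
  show ?thesis unfolding f_simps Av4 using p assms(2) q n1 n2
    by (intro conjI; blast)
qed

lemma f2_Av: assumes "[A,B,C] \<in> Av n 3" "n \<in> B" "B \<noteq> {n}"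
  shows "f2 n [A,B,C] \<in> Av n 4"
proof -
  from assms(1) have p: "A\<noteq>{}" "B\<noteq>{}" "C\<noteq>{}" "A\<inter>B={}" "A\<inter>C={}" "B\<inter>C={}" "A\<union>B\<union>C={1..n}"
    and na: "\<not> inc3 A B C" by (auto simp: Av3)
  have sub: "A \<subseteq> {1..n}" "B \<subseteq> {1..n}" "C \<subseteq> {1..n}" using p(7) by auto
  have q: "B - {n} \<noteq> {}" using assms(2,3) by auto
  have n1: "\<not> inc3 A {n} (B-{n})" "\<not> inc3 A {n} C"
    using sub by (auto intro!: dec23)
  have n3: "\<not> inc3 {n} (B-{n}) C"
    using sub by (auto intro!: dec12)
  have n2: "\<not> inc3 A (B-{n}) C" using na inc3_mono[of A "B-{n}" C A B C] by blast
  show ?thesis unfolding f_simps Av4 using p assms(2) q n1 n2 n3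
    by (intro conjI; blast)
qed

lemma f3_Av: assumes "[A,B,C] \<in> Av n 3" "n \<in> C" "C \<noteq> {n}"
  shows "f3 n [A,B,C] \<in> Av n 4"
proof -
  from assms(1) have p: "A\<noteq>{}" "B\<noteq>{}" "C\<noteq>{}" "A\<inter>B={}" "A\<inter>C={}" "B\<inter>C={}" "A\<union>B\<union>C={1..n}"
    and na: "\<not> inc3 A B C" by (auto simp: Av3)
  have sub: "A \<subseteq> {1..n}" "B \<subseteq> {1..n}" "C \<subseteq> {1..n}" using p(7) by auto
  have q: "C - {n} \<noteq> {}" using assms(2,3) by auto
  have n1: "\<not> inc3 A {n} (C-{n})" "\<not> inc3 B {n} (C-{n})"
    using sub by (auto intro!: dec23)
  have n2: "\<not> inc3 A B (C-{n})" using na inc3_mono[of A B "C-{n}" A B C] by blast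
  have n3: "\<not> inc3 A B {n}" using na inc3_mono[of A B "{n}" A B C] assms(2) by blast
  show ?thesis unfolding f_simps Av4 using p assms(2) q n1 n2 n3
    by (intro conjI; blast)
qed



lemma card2_rm: "card B \<ge> 2 \<Longrightarrow> B - {x} \<noteq> {}"
proof
  assume c: "card B \<ge> 2" and e: "B - {x} = {}"
  then have "B \<subseteq> {x}" by auto
  then have "card B \<le> card {x}" by (rule card_mono[rotated]) simp
  then show False using c by simp
qed

lemma f4_Av: assumes "[A,B,C] \<in> Av n 3" "A = {n}" "card B \<ge> 2" "card C \<ge> 2"
  shows "f4 n [A,B,C] \<in> Av n 4"
proof -
  from assms(1) have p: "A\<noteq>{}" "B\<noteq>{}" "C\<noteq>{}" "A\<inter>B={}" "A\<inter>C={}" "B\<inter>C={}" "A\<union>B\<union>C={1..n}"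
    by (auto simp: Av3)
  have sub: "B \<subseteq> {1..n}" "C \<subseteq> {1..n}" using p(7) by auto
  have fin: "finite B" "finite C" using sub finite_subset by blast+
  have nB: "n \<notin> B" "n \<notin> C" using p(4,5) assms(2) by auto
  have mB: "Min B \<in> B" "Min C \<in> C" using fin p(2,3) by auto
  have leB: "\<forall>x\<in>B. Min B \<le> x" "\<forall>x\<in>C. Min C \<le> x" using fin by auto
  have q: "B - {Min B} \<noteq> {}" "C - {Min C} \<noteq> {}" using card2_rm[OF assms(3)] card2_rm[OF assms(4)] by blast+
  have d12: "\<forall>x\<in>insert n (B - {Min B}). \<forall>y\<in>{Min B}. y \<le> x" using leB mB sub by auto
  have d34: "\<forall>x\<in>C - {Min C}. \<forall>y\<in>{Min C}. y \<le> x" using leB by auto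
  have un: "insert n (B - {Min B}) \<union> {Min B} \<union> (C - {Min C}) \<union> {Min C} = {1..n}"
    using p(7) assms(2) mB by blast
  have dj: "insert n (B - {Min B}) \<inter> {Min B} = {}" "insert n (B - {Min B}) \<inter> (C - {Min C}) = {}"
    "insert n (B - {Min B}) \<inter> {Min C} = {}" "{Min B} \<inter> (C - {Min C}) = {}" "{Min B} \<inter> {Min C} = {}"
    "(C - {Min C}) \<inter> {Min C} = {}"
    using p(6) nB mB by auto
  show ?thesis unfolding f_simps Av4 using q un dj dec12[OF d12] dec23[OF d34]
    by simp
qed

lemma f5_Av: assumes "[A,B,C] \<in> Av n 3" "B = {n}" "card A \<ge> 2" "card C \<ge> 2"
  shows "f5 n [A,B,C] \<in> Av n 4"
proof -
  from assms(1) have p: "A\<noteq>{}" "B\<noteq>{}" "C\<noteq>{}" "A\<inter>B={}" "A\<inter>C={}" "B\<inter>C={}" "A\<union>B\<union>C={1..n}"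
    by (auto simp: Av3)
  have sub: "A \<subseteq> {1..n}" "C \<subseteq> {1..n}" using p(7) by auto
  have fin: "finite A" "finite C" using sub finite_subset by blast+
  have nB: "n \<notin> A" "n \<notin> C" using p(4,6) assms(2) by auto
  have mB: "Min A \<in> A" "Min C \<in> C" using fin p(1,3) by auto
  have leB: "\<forall>x\<in>A. Min A \<le> x" "\<forall>x\<in>C. Min C \<le> x" using fin by auto
  have q: "A - {Min A} \<noteq> {}" "C - {Min C} \<noteq> {}" using card2_rm[OF assms(3)] card2_rm[OF assms(4)] by blast+
  have d34: "\<forall>x\<in>C - {Min C}. \<forall>y\<in>{Min C}. y \<le> x" using leB by auto
  have t1: "\<not> inc3 (A - {Min A}) {n, Min A} Z" if "Z \<subseteq> {1..n}" for Z
    unfolding inc3_def using leB that by fastforce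
  have un: "(A - {Min A}) \<union> {n, Min A} \<union> (C - {Min C}) \<union> {Min C} = {1..n}"
    using p(7) assms(2) mB by blast
  have dj: "(A - {Min A}) \<inter> {n, Min A} = {}" "(A - {Min A}) \<inter> (C - {Min C}) = {}"
    "(A - {Min A}) \<inter> {Min C} = {}" "{n, Min A} \<inter> (C - {Min C}) = {}" "{n, Min A} \<inter> {Min C} = {}"
    "(C - {Min C}) \<inter> {Min C} = {}"
    using p(5) nB mB by auto
  have csub: "C - {Min C} \<subseteq> {1..n}" "{Min C} \<subseteq> {1..n}" using sub mB by auto
  show ?thesis unfolding f_simps Av4 using q un dj dec23[OF d34] t1[OF csub(1)] t1[OF csub(2)]
    by simp
qed

definition g :: "nat \<Rightarrow> nat \<times> nat \<Rightarrow> nat set list" where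
  "g n ab = [{fst ab}, {snd ab}, {1}, insert n ({2..<n} - {fst ab, snd ab})]"

lemma g_Av: assumes "a \<in> {8..<n}" "b \<in> {2..7}"
  shows "g n (a,b) \<in> Av n 4"
proof -
  have un: "{a} \<union> {b} \<union> {1} \<union> insert n ({2..<n} - {a, b}) = {1..n}" using assms by auto
  have d: "\<not> inc3 {a} {b} Z" "\<not> inc3 {a} {1} Z" "\<not> inc3 {b} {1} Z" for Z
    using assms by (auto intro!: dec12)
  show ?thesis unfolding g_def Av4 using un d assms by auto
qed

lemma g_inj: "inj_on (g n) X"
  unfolding g_def inj_on_def by auto

lemma inj_f1: "inj_on (f1 n) {[A,B,C] |A B C. [A,B,C] \<in> Av n 3 \<and> n \<in> A \<and> A \<noteq> {n}}"
proof (rule inj_onI)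
  fix x y assume a: "x \<in> {[A,B,C] |A B C. [A,B,C] \<in> Av n 3 \<and> n \<in> A \<and> A \<noteq> {n}}"
    "y \<in> {[A,B,C] |A B C. [A,B,C] \<in> Av n 3 \<and> n \<in> A \<and> A \<noteq> {n}}" and e0: "f1 n x = f1 n y"
  obtain A B C where x: "x = [A,B,C]" "n \<in> A" using a(1) by blast
  obtain A' B' C' where y: "y = [A',B',C']" "n \<in> A'" using a(2) by blast
  from e0 have "A - {n} = A' - {n}" "B = B'" "C = C'" unfolding x y f_simps by simp_all
  moreover have "A = insert n (A - {n})" "A' = insert n (A' - {n})" using x y by auto
  ultimately show "x = y" using x y by simp
qed

lemma inj_f2: "inj_on (f2 n) {[A,B,C] |A B C. [A,B,C] \<in> Av n 3 \<and> n \<in> B \<and> B \<noteq> {n}}"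
proof (rule inj_onI)
  fix x y assume a: "x \<in> {[A,B,C] |A B C. [A,B,C] \<in> Av n 3 \<and> n \<in> B \<and> B \<noteq> {n}}"
    "y \<in> {[A,B,C] |A B C. [A,B,C] \<in> Av n 3 \<and> n \<in> B \<and> B \<noteq> {n}}" and e0: "f2 n x = f2 n y"
  obtain A B C where x: "x = [A,B,C]" "n \<in> B" using a(1) by blast
  obtain A' B' C' where y: "y = [A',B',C']" "n \<in> B'" using a(2) by blast
  from e0 have "B - {n} = B' - {n}" "A = A'" "C = C'" unfolding x y f_simps by simp_all
  moreover have "B = insert n (B - {n})" "B' = insert n (B' - {n})" using x y by auto
  ultimately show "x = y" using x y by simp
qed

lemma inj_f3: "inj_on (f3 n) {[A,B,C] |A B C. [A,B,C] \<in> Av n 3 \<and> n \<in> C \<and> C \<noteq> {n}}"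
proof (rule inj_onI)
  fix x y assume a: "x \<in> {[A,B,C] |A B C. [A,B,C] \<in> Av n 3 \<and> n \<in> C \<and> C \<noteq> {n}}"
    "y \<in> {[A,B,C] |A B C. [A,B,C] \<in> Av n 3 \<and> n \<in> C \<and> C \<noteq> {n}}" and e0: "f3 n x = f3 n y"
  obtain A B C where x: "x = [A,B,C]" "n \<in> C" using a(1) by blast
  obtain A' B' C' where y: "y = [A',B',C']" "n \<in> C'" using a(2) by blast
  from e0 have "C - {n} = C' - {n}" "A = A'" "B = B'" unfolding x y f_simps by simp_all
  moreover have "C = insert n (C - {n})" "C' = insert n (C' - {n})" using x y by auto
  ultimately show "x = y" using x y by simp
qed

lemma Av3_fin: "[A,B,C] \<in> Av n 3 \<Longrightarrow> finite A \<and> finite B \<and> finite C \<and> A \<subseteq> {1..n} \<and> B \<subseteq> {1..n} \<and> C \<subseteq> {1..n}"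
  unfolding Av3 by (metis Un_upper1 Un_upper2 finite_atLeastAtMost finite_subset sup.coboundedI1)

lemma Av3_dis: "[A,B,C] \<in> Av n 3 \<Longrightarrow> A \<noteq> {} \<and> B \<noteq> {} \<and> C \<noteq> {} \<and> A\<inter>B={} \<and> A\<inter>C={} \<and> B\<inter>C={} \<and> A\<union>B\<union>C={1..n}"
  unfolding Av3 by blast

lemma insert_Min: "finite B \<Longrightarrow> B \<noteq> {} \<Longrightarrow> B = insert (Min B) (B - {Min B})"
  by (metis Min_in insert_Diff)

lemma inj_f4: "inj_on (f4 n) {[A,B,C] |A B C. [A,B,C] \<in> Av n 3 \<and> A = {n} \<and> card B \<ge> 2 \<and> card C \<ge> 2}"
proof (rule inj_onI)
  fix x y assume "x \<in> {[A,B,C] |A B C. [A,B,C] \<in> Av n 3 \<and> A = {n} \<and> card B \<ge> 2 \<and> card C \<ge> 2}"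
    "y \<in> {[A,B,C] |A B C. [A,B,C] \<in> Av n 3 \<and> A = {n} \<and> card B \<ge> 2 \<and> card C \<ge> 2}" "f4 n x = f4 n y"
  then obtain A B C A' B' C' where x: "x = [A,B,C]" "[A,B,C] \<in> Av n 3" "A = {n}"
     and y: "y = [A',B',C']" "[A',B',C'] \<in> Av n 3" "A' = {n}"
    and e: "f4 n [A,B,C] = f4 n [A',B',C']" by blast
  have nB: "n \<notin> B" "n \<notin> B'" using Av3_dis[OF x(2)] Av3_dis[OF y(2)] x(3) y(3) by auto
  have fin: "finite B" "finite C" "finite B'" "finite C'" "B \<noteq> {}" "C \<noteq> {}" "B' \<noteq> {}" "C' \<noteq> {}"
    using Av3_fin[OF x(2)] Av3_fin[OF y(2)] Av3_dis[OF x(2)] Av3_dis[OF y(2)] by auto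
  have L: "insert n (B - {Min B}) = insert n (B' - {Min B'}) \<and> {Min B} = {Min B'} \<and>
    C - {Min C} = C' - {Min C'} \<and> {Min C} = {Min C'}" using e[unfolded f_simps list.inject] by blast
  then have e1: "insert n (B - {Min B}) = insert n (B' - {Min B'})" "Min B = Min B'"
    "C - {Min C} = C' - {Min C'}" "Min C = Min C'" by blast+
  have "B - {Min B} = B' - {Min B'}" using e1(1) nB
    by (metis Diff_insert_absorb Diff_iff)
  then have "B = B'" using insert_Min[of B] insert_Min[of B'] fin e1(2) by metis
  moreover have "C = C'" using insert_Min[of C] insert_Min[of C'] fin e1(3,4) by metis
  ultimately show "x = y" using x y by simp
qed

lemma inj_f5: "inj_on (f5 n) {[A,B,C] |A B C. [A,B,C] \<in> Av n 3 \<and> B = {n} \<and> card A \<ge> 2 \<and> card C \<ge> 2}"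
proof (rule inj_onI)
  fix x y assume "x \<in> {[A,B,C] |A B C. [A,B,C] \<in> Av n 3 \<and> B = {n} \<and> card A \<ge> 2 \<and> card C \<ge> 2}"
    "y \<in> {[A,B,C] |A B C. [A,B,C] \<in> Av n 3 \<and> B = {n} \<and> card A \<ge> 2 \<and> card C \<ge> 2}" "f5 n x = f5 n y"
  then obtain A B C A' B' C' where x: "x = [A,B,C]" "[A,B,C] \<in> Av n 3" "B = {n}"
     and y: "y = [A',B',C']" "[A',B',C'] \<in> Av n 3" "B' = {n}"
    and e: "f5 n [A,B,C] = f5 n [A',B',C']" by blast
  have nB: "n \<notin> A" "n \<notin> A'" using Av3_dis[OF x(2)] Av3_dis[OF y(2)] x(3) y(3) by auto
  have fin: "finite A" "finite C" "finite A'" "finite C'" "A \<noteq> {}" "C \<noteq> {}" "A' \<noteq> {}" "C' \<noteq> {}"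
    using Av3_fin[OF x(2)] Av3_fin[OF y(2)] Av3_dis[OF x(2)] Av3_dis[OF y(2)] by auto
  have L: "A - {Min A} = A' - {Min A'} \<and> {n, Min A} = {n, Min A'} \<and>
    C - {Min C} = C' - {Min C'} \<and> {Min C} = {Min C'}" using e[unfolded f_simps list.inject] by blast
  then have e1: "A - {Min A} = A' - {Min A'}" "{n, Min A} = {n, Min A'}"
    "C - {Min C} = C' - {Min C'}" "Min C = Min C'" by blast+
  have "Min A \<in> A" "Min A' \<in> A'" using fin by auto
  then have "Min A = Min A'" using e1(2) nB by (metis doubleton_eq_iff)
  then have "A = A'" using insert_Min[of A] insert_Min[of A'] fin e1(1) by metis
  moreover have "C = C'" using insert_Min[of C] insert_Min[of C'] fin e1(3,4) by metis
  ultimately show "x = y" using x y by simp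
qed

definition "M1 n = {[A,B,C] |A B C. [A,B,C] \<in> Av n 3 \<and> n \<in> A \<and> A \<noteq> {n}}"
definition "M2 n = {[A,B,C] |A B C. [A,B,C] \<in> Av n 3 \<and> n \<in> B \<and> B \<noteq> {n}}"
definition "M3 n = {[A,B,C] |A B C. [A,B,C] \<in> Av n 3 \<and> n \<in> C \<and> C \<noteq> {n}}"
definition "R1 n = {[A,B,C] |A B C. [A,B,C] \<in> Av n 3 \<and> A = {n} \<and> card B \<ge> 2 \<and> card C \<ge> 2}"
definition "R2 n = {[A,B,C] |A B C. [A,B,C] \<in> Av n 3 \<and> B = {n} \<and> card A \<ge> 2 \<and> card C \<ge> 2}"

definition "e1 n x = [{n}, {x}, {1..<n} - {x}]"
definition "e2 n x = [{n}, {1..<n} - {x}, {x}]"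
definition "e3 n x = [{x}, {n}, {1..<n} - {x}]"
definition "e4 n x = [{1..<n} - {x}, {n}, {x}]"
definition "e5 n x = [{x..<n}, {1..<x}, {n}]"

definition "Ebig n = e1 n ` {1..n} \<union> e2 n ` {1..n} \<union> e3 n ` {1..n} \<union> e4 n ` {1..n} \<union> e5 n ` {1..n}"

lemma setbI: "x = [A,B,C] \<Longrightarrow> P A B C \<Longrightarrow> x \<in> {[A,B,C] |A B C. P A B C}"
  by blast

lemma sing2: "finite B \<Longrightarrow> B \<noteq> {} \<Longrightarrow> \<not> card B \<ge> 2 \<Longrightarrow> \<exists>x. B = {x}"
proof -
  assume "finite B" "B \<noteq> {}" "\<not> card B \<ge> 2"
  then have "0 < card B" by (simp add: card_gt_0_iff)
  with \<open>\<not> card B \<ge> 2\<close> have "card B = 1" by arith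
  then show ?thesis by (rule card_1_singletonE) blast
qed

lemma third: fixes n x :: nat assumes "X \<union> Y \<union> Z = {1..n}" "X \<inter> Z = {}" "Y \<inter> Z = {}" "X = {n}" "Y = {x}"
  shows "Z = {1..<n} - {x}"
proof (intro equalityI subsetI)
  fix c assume c: "c \<in> Z"
  then have "c \<in> {1..n}" using assms(1) by blast
  moreover have "c \<noteq> n" "c \<noteq> x" using c assms(2-5) by auto
  ultimately show "c \<in> {1..<n} - {x}" by auto
next
  fix c assume c: "c \<in> {1..<n} - {x}"
  then have "c \<in> {1..n}" "c \<noteq> n" "c \<noteq> x" by auto
  then show "c \<in> Z" using assms(1,4,5) by blast
qed

lemma cover: assumes "n \<ge> 1"
  shows "Av n 3 \<subseteq> M1 n \<union> M2 n \<union> M3 n \<union> R1 n \<union> R2 n \<union> Ebig n"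
proof
  fix bs assume bs: "bs \<in> Av n 3"
  then obtain A B C where bsd: "bs = [A,B,C]" using Av3_form by blast
  have av: "[A,B,C] \<in> Av n 3" using bs bsd by simp
  have d: "A \<noteq> {}" "B \<noteq> {}" "C \<noteq> {}" "A\<inter>B={}" "A\<inter>C={}" "B\<inter>C={}" "A\<union>B\<union>C={1..n}"
    using Av3_dis[OF av] by auto
  have f: "finite A" "finite B" "finite C" using Av3_fin[OF av] by auto
  have ni: "\<not> inc3 A B C" using av by (simp add: Av3)
  have nin: "n \<in> A \<union> B \<union> C" using d(7) assms by auto
  show "bs \<in> M1 n \<union> M2 n \<union> M3 n \<union> R1 n \<union> R2 n \<union> Ebig n"
  proof (cases "n \<in> A")
    case nA: True
    show ?thesis
    proof (cases "A = {n}")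
      case False then have "bs \<in> M1 n" unfolding M1_def by - (rule setbI[OF bsd], use av nA False in auto)
      then show ?thesis by blast
    next
      case Aeq: True
      show ?thesis
      proof (cases "card B \<ge> 2 \<and> card C \<ge> 2")
        case True then have "bs \<in> R1 n" unfolding R1_def by - (rule setbI[OF bsd], use av Aeq True in auto)
        then show ?thesis by blast
      next
        case False
        then have "\<not> card B \<ge> 2 \<or> \<not> card C \<ge> 2" by simp
        then show ?thesis
        proof
          assume "\<not> card B \<ge> 2"
          then obtain x where x: "B = {x}" using sing2[OF f(2) d(2)] by blast
          have "C = {1..<n} - {x}" using third[where X=A and Y=B and Z=C and n=n and x=x] d Aeq x by blast
          moreover have "x \<in> {1..n}" using d(7) x by auto
          ultimately have "bs \<in> e1 n ` {1..n}" unfolding e1_def bsd Aeq x by blast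
          then show ?thesis unfolding Ebig_def by blast
        next
          assume "\<not> card C \<ge> 2"
          then obtain x where x: "C = {x}" using sing2[OF f(3) d(3)] by blast
          have "B = {1..<n} - {x}" using third[where X=A and Y=C and Z=B and n=n and x=x] d Aeq x by (metis Int_commute Un_commute Un_left_commute)
          moreover have "x \<in> {1..n}" using d(7) x by auto
          ultimately have "bs \<in> e2 n ` {1..n}" unfolding e2_def bsd Aeq x by blast
          then show ?thesis unfolding Ebig_def by blast
        qed
      qed
    qed
  next
    case nA: False
    show ?thesis
    proof (cases "n \<in> B")
      case nB: True
      show ?thesis
      proof (cases "B = {n}")
        case False then have "bs \<in> M2 n" unfolding M2_def by - (rule setbI[OF bsd], use av nB False in auto)
        then show ?thesis by blast
      next
        case Beq: True
        show ?thesis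
        proof (cases "card A \<ge> 2 \<and> card C \<ge> 2")
          case True then have "bs \<in> R2 n" unfolding R2_def by - (rule setbI[OF bsd], use av Beq True in auto)
          then show ?thesis by blast
        next
          case False
          then have "\<not> card A \<ge> 2 \<or> \<not> card C \<ge> 2" by simp
          then show ?thesis
          proof
            assume "\<not> card A \<ge> 2"
            then obtain x where x: "A = {x}" using sing2[OF f(1) d(1)] by blast
            have "C = {1..<n} - {x}" using third[where X=B and Y=A and Z=C and n=n and x=x] d Beq x by (metis Int_commute Un_commute Un_left_commute)
            moreover have "x \<in> {1..n}" using d(7) x by auto
            ultimately have "bs \<in> e3 n ` {1..n}" unfolding e3_def bsd Beq x by blast
            then show ?thesis unfolding Ebig_def by blast
          next
            assume "\<not> card C \<ge> 2"
            then obtain x where x: "C = {x}" using sing2[OF f(3) d(3)] by blast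
            have "A = {1..<n} - {x}" using third[where X=B and Y=C and Z=A and n=n and x=x] d Beq x by (metis Int_commute Un_commute Un_left_commute)
            moreover have "x \<in> {1..n}" using d(7) x by auto
            ultimately have "bs \<in> e4 n ` {1..n}" unfolding e4_def bsd Beq x by blast
            then show ?thesis unfolding Ebig_def by blast
          qed
        qed
      qed
    next
      case nB: False
      then have nC: "n \<in> C" using nin nA by blast
      show ?thesis
      proof (cases "C = {n}")
        case False then have "bs \<in> M3 n" unfolding M3_def by - (rule setbI[OF bsd], use av nC False in auto)
        then show ?thesis by blast
      next
        case Ceq: True
        define x where "x = Min A"
        have xA: "x \<in> A" "\<forall>a\<in>A. x \<le> a" using f d unfolding x_def by auto
        have x1: "x \<in> {1..n}" using xA d(7) by auto
        have A1: "A \<subseteq> {x..<n}"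
        proof
          fix a assume "a \<in> A"
          then have "x \<le> a" "a \<le> n" "a \<noteq> n" using xA d(7) nA by auto
          then show "a \<in> {x..<n}" by auto
        qed
        have A2: "{x..<n} \<subseteq> A"
        proof
          fix a assume a: "a \<in> {x..<n}"
          then have "a \<in> {1..n}" using x1 by auto
          then have "a \<in> A \<or> a \<in> B" using d(7) Ceq a by auto
          moreover have "a \<notin> B"
          proof
            assume aB: "a \<in> B"
            then have "x \<noteq> a" using xA d(4) by auto
            then have "x < a" "a < n" using a by auto
            then have "inc3 A B C" unfolding inc3_def using xA aB Ceq by blast
            then show False using ni by simp
          qed
          ultimately show "a \<in> A" by blast
        qed
        have Aeq: "A = {x..<n}" using A1 A2 by blast
        have Beq: "B = {1..<x}"
        proof
          show "B \<subseteq> {1..<x}"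
          proof
            fix b assume bB: "b \<in> B"
            then have "b \<in> {1..n}" "b \<noteq> n" using d(7) nB by auto
            moreover have "\<not> x \<le> b" using bB Aeq d(4) \<open>b \<noteq> n\<close> \<open>b \<in> {1..n}\<close> by auto
            ultimately show "b \<in> {1..<x}" by auto
          qed
          show "{1..<x} \<subseteq> B"
          proof
            fix b assume b: "b \<in> {1..<x}"
            have b1: "b \<in> {1..n}" "b \<noteq> n" using b x1 by auto
            have b2: "b \<notin> A" unfolding Aeq using b by auto
            have "b \<in> A \<union> B \<union> C" using b1 d(7) by blast
            then show "b \<in> B" using b1 b2 Ceq by blast
          qed
        qed
        have "bs \<in> e5 n ` {1..n}" unfolding e5_def bsd Aeq Beq Ceq using x1 by blast
        then show ?thesis unfolding Ebig_def by blast
      qed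
    qed
  qed
qed

lemma card_Ebig: "card (Ebig n) \<le> 5 * n"
proof -
  have "card (Ebig n) \<le> card (e1 n ` {1..n} \<union> e2 n ` {1..n} \<union> e3 n ` {1..n} \<union> e4 n ` {1..n}) + card (e5 n ` {1..n})"
    unfolding Ebig_def by (rule card_Un_le)
  also have "\<dots> \<le> card (e1 n ` {1..n} \<union> e2 n ` {1..n} \<union> e3 n ` {1..n}) + card (e4 n ` {1..n}) + card (e5 n ` {1..n})"
    using card_Un_le by (metis add_le_mono1)
  also have "\<dots> \<le> card (e1 n ` {1..n} \<union> e2 n ` {1..n}) + card (e3 n ` {1..n}) + card (e4 n ` {1..n}) + card (e5 n ` {1..n})"
    using card_Un_le by (metis add_le_mono1)
  also have "\<dots> \<le> card (e1 n ` {1..n}) + card (e2 n ` {1..n}) + card (e3 n ` {1..n}) + card (e4 n ` {1..n}) + card (e5 n ` {1..n})"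
    using card_Un_le by (metis add_le_mono1)
  also have "\<dots> \<le> n + n + n + n + n"
    using card_image_le[of "{1..n}"] by (intro add_mono) auto
  finally show ?thesis by simp
qed

definition sig :: "nat \<Rightarrow> nat set list \<Rightarrow> nat" where
  "sig n D = (if n \<in> D!0 then (if D!0 = {n} then 1 else 4) else if n \<in> D!1 then (if D!1 = {n} then 2 else 5)
     else if n \<in> D!2 then 3 else 6)"

lemma sig1: "x \<in> M1 n \<Longrightarrow> sig n (f1 n x) = 1"
  unfolding M1_def by (auto simp: sig_def f_simps)

lemma sig2: assumes "x \<in> M2 n" shows "sig n (f2 n x) = 2"
proof -
  obtain A B C where x: "x = [A,B,C]" "[A,B,C] \<in> Av n 3" "n \<in> B" using assms unfolding M2_def by blast
  have "n \<notin> A" using Av3_dis[OF x(2)] x(3) by blast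
  then show ?thesis unfolding x(1) sig_def f_simps by simp
qed

lemma sig3: assumes "x \<in> M3 n" shows "sig n (f3 n x) = 3"
proof -
  obtain A B C where x: "x = [A,B,C]" "[A,B,C] \<in> Av n 3" "n \<in> C" using assms unfolding M3_def by blast
  have "n \<notin> A" "n \<notin> B" using Av3_dis[OF x(2)] x(3) by blast+
  then show ?thesis unfolding x(1) sig_def f_simps by simp
qed

lemma sig4: assumes "x \<in> R1 n" shows "sig n (f4 n x) = 4"
proof -
  obtain A B C where x: "x = [A,B,C]" "[A,B,C] \<in> Av n 3" "A = {n}" "card B \<ge> 2"
    using assms unfolding R1_def by blast
  have nB: "n \<notin> B" using Av3_dis[OF x(2)] x(3) by blast
  have "B - {Min B} \<noteq> {}" using card2_rm[OF x(4)] by blast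
  then have "insert n (B - {Min B}) \<noteq> {n}" using nB by blast
  then show ?thesis unfolding x(1) sig_def f_simps by simp
qed

lemma sig5: assumes "x \<in> R2 n" shows "sig n (f5 n x) = 5"
proof -
  obtain A B C where x: "x = [A,B,C]" "[A,B,C] \<in> Av n 3" "B = {n}" "card A \<ge> 2"
    using assms unfolding R2_def by blast
  have nA: "n \<notin> A" using Av3_dis[OF x(2)] x(3) by blast
  have "finite A" "A \<noteq> {}" using Av3_fin[OF x(2)] Av3_dis[OF x(2)] by auto
  then have "Min A \<in> A" by simp
  then have "Min A \<noteq> n" using nA by blast
  then have "{n, Min A} \<noteq> {n}" by blast
  then show ?thesis unfolding x(1) sig_def f_simps using nA by simp
qed

lemma sig6: assumes "ab \<in> {8..<n} \<times> {2..7}" shows "sig n (g n ab) = 6"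
  using assms unfolding sig_def g_def by auto

lemma card6_le: "card (X1 \<union> X2 \<union> X3 \<union> X4 \<union> X5 \<union> X6) \<le> card X1 + card X2 + card X3 + card X4 + card X5 + card X6"
  using card_Un_le[of X1 X2] card_Un_le[of "X1\<union>X2" X3] card_Un_le[of "X1\<union>X2\<union>X3" X4]
    card_Un_le[of "X1\<union>X2\<union>X3\<union>X4" X5] card_Un_le[of "X1\<union>X2\<union>X3\<union>X4\<union>X5" X6] by linarith

lemma card6_eq:
  fixes s :: "'a \<Rightarrow> nat"
  assumes f: "finite X1" "finite X2" "finite X3" "finite X4" "finite X5" "finite X6"
    and s: "\<forall>x\<in>X1. s x = 1" "\<forall>x\<in>X2. s x = 2" "\<forall>x\<in>X3. s x = 3" "\<forall>x\<in>X4. s x = 4"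
      "\<forall>x\<in>X5. s x = 5" "\<forall>x\<in>X6. s x = 6"
  shows "card (X1 \<union> X2 \<union> X3 \<union> X4 \<union> X5 \<union> X6) = card X1 + card X2 + card X3 + card X4 + card X5 + card X6"
proof -
  have d2: "X1 \<inter> X2 = {}" using s by force
  have d3: "(X1 \<union> X2) \<inter> X3 = {}" using s by force
  have d4: "(X1 \<union> X2 \<union> X3) \<inter> X4 = {}" using s by force
  have d5: "(X1 \<union> X2 \<union> X3 \<union> X4) \<inter> X5 = {}" using s by force
  have d6: "(X1 \<union> X2 \<union> X3 \<union> X4 \<union> X5) \<inter> X6 = {}" using s by force
  show ?thesis
    using card_Un_disjoint[OF _ _ d2] card_Un_disjoint[OF _ _ d3] card_Un_disjoint[OF _ _ d4]
      card_Un_disjoint[OF _ _ d5] card_Un_disjoint[OF _ _ d6] f by simp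
qed

lemma main: assumes n50: "n \<ge> 50" shows "op_123 n 3 < op_123 n 4"
proof -
  have sub: "M1 n \<subseteq> Av n 3" "M2 n \<subseteq> Av n 3" "M3 n \<subseteq> Av n 3" "R1 n \<subseteq> Av n 3" "R2 n \<subseteq> Av n 3"
    unfolding M1_def M2_def M3_def R1_def R2_def by blast+
  have fin: "finite (M1 n)" "finite (M2 n)" "finite (M3 n)" "finite (R1 n)" "finite (R2 n)"
    using sub Av_finite finite_subset by blast+
  have finE: "finite (Ebig n)" unfolding Ebig_def by simp
  have "card (Av n 3) \<le> card (M1 n \<union> M2 n \<union> M3 n \<union> R1 n \<union> R2 n \<union> Ebig n)"
    by (rule card_mono) (use fin finE cover[of n] n50 in auto)
  also have "\<dots> \<le> card (M1 n) + card (M2 n) + card (M3 n) + card (R1 n) + card (R2 n) + card (Ebig n)"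
    by (rule card6_le)
  finally have up: "card (Av n 3) \<le> card (M1 n) + card (M2 n) + card (M3 n) + card (R1 n) + card (R2 n) + 5 * n"
    using card_Ebig[of n] by linarith
  define G where "G = g n ` ({8..<n} \<times> {2..7})"
  have cG: "card G = (n - 8) * 6" unfolding G_def
    by (simp add: card_image[OF g_inj] card_cartesian_product)
  have c1: "card (f1 n ` M1 n) = card (M1 n)" by (rule card_image) (unfold M1_def, rule inj_f1)
  have c2: "card (f2 n ` M2 n) = card (M2 n)" by (rule card_image) (unfold M2_def, rule inj_f2)
  have c3: "card (f3 n ` M3 n) = card (M3 n)" by (rule card_image) (unfold M3_def, rule inj_f3)
  have c4: "card (f4 n ` R1 n) = card (R1 n)" by (rule card_image) (unfold R1_def, rule inj_f4)
  have c5: "card (f5 n ` R2 n) = card (R2 n)" by (rule card_image) (unfold R2_def, rule inj_f5)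
  have U: "card (f1 n ` M1 n \<union> f2 n ` M2 n \<union> f3 n ` M3 n \<union> f4 n ` R1 n \<union> f5 n ` R2 n \<union> G) =
    card (f1 n ` M1 n) + card (f2 n ` M2 n) + card (f3 n ` M3 n) + card (f4 n ` R1 n) + card (f5 n ` R2 n) + card G"
  proof (rule card6_eq[where s="sig n"])
    show "finite (f1 n ` M1 n)" "finite (f2 n ` M2 n)" "finite (f3 n ` M3 n)" "finite (f4 n ` R1 n)"
      "finite (f5 n ` R2 n)" "finite G" using fin unfolding G_def by auto
    show "\<forall>x\<in>f1 n ` M1 n. sig n x = 1" using sig1 by blast
    show "\<forall>x\<in>f2 n ` M2 n. sig n x = 2" using sig2 by blast
    show "\<forall>x\<in>f3 n ` M3 n. sig n x = 3" using sig3 by blast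
    show "\<forall>x\<in>f4 n ` R1 n. sig n x = 4" using sig4 by blast
    show "\<forall>x\<in>f5 n ` R2 n. sig n x = 5" using sig5 by blast
    show "\<forall>x\<in>G. sig n x = 6" unfolding G_def using sig6 by blast
  qed
  have inc: "f1 n ` M1 n \<union> f2 n ` M2 n \<union> f3 n ` M3 n \<union> f4 n ` R1 n \<union> f5 n ` R2 n \<union> G \<subseteq> Av n 4"
  proof -
    have "f1 n ` M1 n \<subseteq> Av n 4" unfolding M1_def using f1_Av by blast
    moreover have "f2 n ` M2 n \<subseteq> Av n 4" unfolding M2_def using f2_Av by blast
    moreover have "f3 n ` M3 n \<subseteq> Av n 4" unfolding M3_def using f3_Av by blast
    moreover have "f4 n ` R1 n \<subseteq> Av n 4" unfolding R1_def using f4_Av by blast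
    moreover have "f5 n ` R2 n \<subseteq> Av n 4" unfolding R2_def using f5_Av by blast
    moreover have "G \<subseteq> Av n 4" unfolding G_def
      by (rule image_subsetI, erule SigmaE, hypsubst, rule g_Av, assumption+)
    ultimately show ?thesis by (simp only: Un_subset_iff)
  qed
  have low: "card (M1 n) + card (M2 n) + card (M3 n) + card (R1 n) + card (R2 n) + (n - 8) * 6 \<le> card (Av n 4)"
    using card_mono[OF Av_finite inc] U c1 c2 c3 c4 c5 cG by simp
  show ?thesis unfolding op_Av using up low n50 by linarith
qed

theorem theorem9:
  shows "\<exists>n0::nat. \<forall>n\<ge>n0. op_123 n 4 > op_123 n 3"
  using main by blast
end
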